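(* Let $\Phi(r)=U'(r)/(1+U(r))$ for $r\ge0$. There exist positive numbers $T_-<T_+$ and $\Phi_0$ such that $\Phi$ is an increasing diffeomorphism from $(0,T_-)$ onto $(0,\Phi_0)$, a decreasing diffeomorphism from $(T_+,\infty)$ onto $(0,\Phi_0)$, and $\Phi^{-1}((0,\Phi_0))=(0,T_-)\cup(T_+,\infty)$. Moreover $\Phi(r)\sim\frac{2r}{15\pi}$ as $r\to0$ and $\Phi(r)\sim\frac{1}{r\log r}$ as $r\to\infty$.
   Context: $U(r)=\frac{r^2}{4\pi}\int_0^1\frac{z^2-z^4/3}{1+r^2(1-z^2)/4}dz$ for $r\ge0$. *)

theory Defs
  imports "HOL-Analysis.Analysis" "HOL-Library.Landau_Symbols"
begin

definition U :: "real \<Rightarrow> real" where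
  "U r = r^2 / (4*pi) * integral {0..1} (\<lambda>z. (z^2 - z^4/3) / (1 + r^2 * (1 - z^2) / 4))"

definition Phi :: "real \<Rightarrow> real" where
  "Phi r = deriv U r / (1 + U r)"

definition diffeo_onto :: "(real \<Rightarrow> real) \<Rightarrow> real set \<Rightarrow> real set \<Rightarrow> bool" where
  "diffeo_onto f A B \<longleftrightarrow> bij_betw f A B \<and> f C1_differentiable_on A
     \<and> the_inv_into A f C1_differentiable_on B"

end

theory Submission
  imports Defs "HOL-Real_Asymp.Real_Asymp"
begin

lemma diffeo_lemma:
  fixes f f' :: "real \<Rightarrow> real"
  assumes I: "open I" and J: "open J" and bij: "bij_betw f I J"
   and der: "\<And>x. x \<in> I \<Longrightarrow> (f has_real_derivative f' x) (at x)"
   and cf': "continuous_on I f'" and nz: "\<And>x. x\<in>I \<Longrightarrow> f' x \<noteq> 0"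
  shows "diffeo_onto f I J"
proof -
  define g where "g = the_inv_into I f"
  have inj: "inj_on f I" using bij bij_betw_imp_inj_on by blast
  have fI: "f ` I = J" using bij bij_betw_imp_surj_on by blast
  have gf: "\<And>x. x\<in>I \<Longrightarrow> g (f x) = x" by (simp add: g_def the_inv_into_f_f inj)
  have fg: "f (g y) = y" if "y\<in>J" for y
    unfolding g_def by (rule f_the_inv_into_f[OF inj]) (use that fI in simp)
  have gJ: "g y \<in> I" if "y\<in>J" for y
    unfolding g_def by (rule the_inv_into_into[OF inj]) (use that fI in auto)
  have contg: "isCont g y" if y: "y\<in>J" for y
  proof -
    obtain d where d: "d>0" "cball (g y) d \<subseteq> I" using I gJ[OF y] by (auto simp: open_contains_cball)
    have "isCont g (f (g y))"
    proof (rule isCont_inverse_function[where f=f and g=g and x="g y", OF d(1)])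
      fix z assume "\<bar>z - g y\<bar> \<le> d"
      then have "z \<in> I" using d(2) by (auto simp: dist_real_def)
      show "g (f z) = z" using \<open>z\<in>I\<close> gf by blast
    next
      fix z assume "\<bar>z - g y\<bar> \<le> d"
      then have "z \<in> I" using d(2) by (auto simp: dist_real_def)
      show "isCont f z" using \<open>z\<in>I\<close> der DERIV_isCont by blast
    qed
    thus "isCont g y" using fg y by simp
  qed
  have derg: "(g has_real_derivative inverse (f' (g y))) (at y)" if y: "y\<in>J" for y
  proof -
    obtain e where e: "e>0" "ball y e \<subseteq> J" using J y by (auto simp: open_contains_ball)
    show ?thesis
    proof (rule DERIV_inverse_function[where a="y-e" and b="y+e"])
      show "(f has_real_derivative f' (g y)) (at (g y))" using der gJ y by blast
      show "f' (g y) \<noteq> 0" using nz gJ y by blast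
      show "y - e < y" "y < y + e" using e by auto
      show "f (g z) = z" if "y - e < z" "z < y + e" for z
        proof -
          have "z \<in> ball y e" using that by (auto simp: dist_real_def)
          then show ?thesis using e(2) fg by blast
        qed
      show "isCont g y" using contg y .
    qed
  qed
  have cg: "continuous_on J g" using contg by (simp add: continuous_at_imp_continuous_on)
  have c2: "continuous_on J (\<lambda>y. f' (g y))"
    by (rule continuous_on_compose2[OF cf' cg]) (use gJ in auto)
  have c3: "continuous_on J (\<lambda>y. inverse (f' (g y)))"
    by (rule continuous_on_inverse[OF c2]) (use nz gJ in auto)
  show ?thesis unfolding diffeo_onto_def C1_differentiable_on_def
  proof (intro conjI)
    show "bij_betw f I J" by fact
    show "\<exists>D. (\<forall>x\<in>I. (f has_vector_derivative D x) (at x)) \<and> continuous_on I D"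
    proof (intro exI conjI ballI)
      fix x assume "x \<in> I"
      then show "(f has_vector_derivative f' x) (at x)"
        using der has_real_derivative_iff_has_vector_derivative by blast
    qed (rule cf')
    show "\<exists>D. (\<forall>x\<in>J. (the_inv_into I f has_vector_derivative D x) (at x)) \<and> continuous_on J D"
    proof (intro exI conjI ballI)
      fix x assume "x \<in> J"
      then show "(the_inv_into I f has_vector_derivative inverse (f' (g x))) (at x)"
        using derg has_real_derivative_iff_has_vector_derivative unfolding g_def by blast
    qed (rule c3)
  qed
qed

lemma abstract_shape:
  fixes f f' :: "real \<Rightarrow> real"
  assumes der: "\<And>x. x > 0 \<Longrightarrow> (f has_real_derivative f' x) (at x)"
  and cf': "continuous_on {0<..} f'"
  and pos: "\<And>x. x > 0 \<Longrightarrow> f x > 0"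
  and f0: "f 0 = 0"
  and lim0: "(f \<longlongrightarrow> 0) (at_right 0)"
  and limtop: "(f \<longlongrightarrow> 0) at_top"
  and inc: "eventually (\<lambda>x. f' x > 0) (at_right 0)"
  and dec: "eventually (\<lambda>x. f' x < 0) at_top"
  shows "\<exists>Tm Tp Phi0::real. 0 < Tm \<and> Tm < Tp \<and> 0 < Phi0 \<and>
     diffeo_onto f {0<..<Tm} {0<..<Phi0} \<and>
     (\<forall>x\<in>{0<..<Tm}. \<forall>y\<in>{0<..<Tm}. x < y \<longrightarrow> f x < f y) \<and>
     diffeo_onto f {Tp<..} {0<..<Phi0} \<and>
     (\<forall>x\<in>{Tp<..}. \<forall>y\<in>{Tp<..}. x < y \<longrightarrow> f y < f x) \<and>
     {r. 0 \<le> r \<and> f r \<in> {0<..<Phi0}} = {0<..<Tm} \<union> {Tp<..}"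
proof -
  obtain \<delta> where \<delta>: "\<delta> > 0" "\<And>x. 0 < x \<Longrightarrow> x < \<delta> \<Longrightarrow> f' x > 0"
    using inc unfolding eventually_at_right[OF zero_less_one] by blast
  obtain R1 where R1: "\<And>x. x \<ge> R1 \<Longrightarrow> f' x < 0"
    using dec unfolding eventually_at_top_linorder by blast
  define R0 where "R0 = max R1 1"
  have R0: "\<And>x. x \<ge> R0 \<Longrightarrow> f' x < 0" "R0 > 0" using R1 by (auto simp: R0_def)
  define a where "a = \<delta>/2"
  define R where "R = max R0 \<delta>"
  have a: "0 < a" "a < \<delta>" "a < R" using \<delta> by (auto simp: a_def R_def)
  have contf: "continuous_on {0<..} f"
    by (rule continuous_at_imp_continuous_on) (use der DERIV_isCont in auto)
  have cont_sub: "continuous_on {u..v} f" if "0 < u" for u v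
    by (rule continuous_on_subset[OF contf]) (use that in auto)
  have inc_on: "f x < f y" if "0 < x" "x < y" "y < \<delta>" for x y
  proof (rule DERIV_pos_imp_increasing[OF \<open>x<y\<close>])
    fix t assume t: "x \<le> t" "t \<le> y"
    then have "0 < t" "t < \<delta>" using that by auto
    then show "\<exists>z. (f has_real_derivative z) (at t) \<and> z > 0" using der \<delta>(2) by blast
  qed
  have dec_on: "f y < f x" if "R0 \<le> x" "x < y" for x y
  proof (rule DERIV_neg_imp_decreasing[OF \<open>x<y\<close>])
    fix t assume t: "x \<le> t" "t \<le> y"
    then have "R0 \<le> t" using that by auto
    moreover have "0 < t" using R0(2) \<open>R0 \<le> t\<close> by linarith
    ultimately show "\<exists>z. (f has_real_derivative z) (at t) \<and> z < 0" using der R0(1) by blast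
  qed
  obtain xm where xm: "xm \<in> {a..R}" "\<And>y. y \<in> {a..R} \<Longrightarrow> f xm \<le> f y"
    using continuous_attains_inf[of "{a..R}" f] cont_sub[OF a(1)] a by auto
  define m where "m = f xm"
  have m: "m > 0" using xm a pos by (auto simp: m_def)
  have mle: "m \<le> f y" if "a \<le> y" "y \<le> R" for y using xm that by (auto simp: m_def)
  have small0: "\<exists>e. 0 < e \<and> e < c \<and> f e < y" if "0 < y" "0 < c" for y c
  proof -
    have "eventually (\<lambda>x. f x < y) (at_right 0)"
      using order_tendstoD(2)[OF lim0 \<open>0<y\<close>] .
    then obtain b where b: "b > 0" "\<And>x. 0 < x \<Longrightarrow> x < b \<Longrightarrow> f x < y"
      unfolding eventually_at_right[OF zero_less_one] by blast
    show ?thesis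
      by (rule exI[of _ "min b c / 2"]) (use b that in auto)
  qed
  have smalltop: "\<exists>e. c < e \<and> f e < y" if "0 < y" for y c
  proof -
    have "eventually (\<lambda>x. f x < y) at_top"
      using order_tendstoD(2)[OF limtop \<open>0<y\<close>] .
    then obtain b where b: "\<And>x. x \<ge> b \<Longrightarrow> f x < y"
      unfolding eventually_at_top_linorder by blast
    show ?thesis
      by (rule exI[of _ "max b c + 1"]) (use b in auto)
  qed
  obtain e1 where e1: "0 < e1" "e1 < a" "f e1 < m" using small0[OF m a(1)] by blast
  obtain Tm where Tm: "e1 \<le> Tm" "Tm \<le> a" "f Tm = m"
    using IVT'[of f e1 m a] e1 mle[of a] a cont_sub[OF e1(1)] by auto
  obtain M where M: "R < M" "f M < m" using smalltop[OF m] by blast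
  obtain Tp where Tp: "R \<le> Tp" "Tp \<le> M" "f Tp = m"
    using IVT2'[of f M m R] M mle[of R] a cont_sub[of R M] by auto
  have R0R: "R0 \<le> R" by (simp add: R_def)
  have Tm0: "0 < Tm" using Tm e1 by auto
  have TmTp: "Tm < Tp" using Tm Tp a by auto
  have inc1: "\<forall>x\<in>{0<..<Tm}. \<forall>y\<in>{0<..<Tm}. x < y \<longrightarrow> f x < f y"
    using inc_on Tm a by auto
  have dec1: "\<forall>x\<in>{Tp<..}. \<forall>y\<in>{Tp<..}. x < y \<longrightarrow> f y < f x"
    using dec_on Tp R0R by auto
  have below1: "f x < m" if "0 < x" "x < Tm" for x
    using inc_on[of x Tm] that Tm a by auto
  have below2: "f x < m" if "Tp < x" for x
    using dec_on[of Tp x] that Tp R0R by auto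
  have above: "m \<le> f x" if "Tm \<le> x" "x \<le> Tp" for x
  proof -
    consider "x \<le> a" | "a \<le> x" "x \<le> R" | "R \<le> x" by linarith
    then show ?thesis
    proof cases
      case 1
      then show ?thesis using inc_on[of Tm x] that Tm Tm0 a by (cases "x = Tm") auto
    next
      case 2
      then show ?thesis using mle by auto
    next
      case 3
      then show ?thesis using dec_on[of x Tp] that Tp R0R by (cases "x = Tp") auto
    qed
  qed
  have setq: "{r. 0 \<le> r \<and> f r \<in> {0<..<m}} = {0<..<Tm} \<union> {Tp<..}"
  proof (intro set_eqI iffI)
    fix r assume "r \<in> {r. 0 \<le> r \<and> f r \<in> {0<..<m}}"
    then have r: "0 \<le> r" "0 < f r" "f r < m" by auto
    have "r \<noteq> 0" using r f0 by auto
    then show "r \<in> {0<..<Tm} \<union> {Tp<..}"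
      using r above[of r] by force
  next
    fix r assume "r \<in> {0<..<Tm} \<union> {Tp<..}"
    then show "r \<in> {r. 0 \<le> r \<and> f r \<in> {0<..<m}}"
      using below1 below2 pos Tm0 TmTp by auto
  qed
  have d1: "diffeo_onto f {0<..<Tm} {0<..<m}"
  proof (rule diffeo_lemma[where f'=f'])
    show "bij_betw f {0<..<Tm} {0<..<m}"
    proof (rule bij_betw_imageI)
      show "inj_on f {0<..<Tm}"
        unfolding inj_on_def by (metis inc1 linorder_neqE_linordered_idom order_less_irrefl)
      show "f ` {0<..<Tm} = {0<..<m}"
      proof (intro equalityI subsetI)
        fix y assume "y \<in> f ` {0<..<Tm}"
        then show "y \<in> {0<..<m}" using below1 pos by auto
      next
        fix y assume y: "y \<in> {0<..<m}"
        then obtain e where e: "0 < e" "e < Tm" "f e < y" using small0[of y Tm] Tm0 by auto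
        obtain x where x: "e \<le> x" "x \<le> Tm" "f x = y"
          using IVT'[of f e y Tm] e y Tm cont_sub[OF e(1)] by auto
        have "x \<noteq> Tm" using x Tm y by auto
        then show "y \<in> f ` {0<..<Tm}" using x e by force
      qed
    qed
    show "(f has_real_derivative f' x) (at x)" if "x \<in> {0<..<Tm}" for x using der that by auto
    show "continuous_on {0<..<Tm} f'" by (rule continuous_on_subset[OF cf']) auto
    show "f' x \<noteq> 0" if "x \<in> {0<..<Tm}" for x using \<delta>(2)[of x] that Tm a by auto
  qed auto
  have d2: "diffeo_onto f {Tp<..} {0<..<m}"
  proof (rule diffeo_lemma[where f'=f'])
    show "bij_betw f {Tp<..} {0<..<m}"
    proof (rule bij_betw_imageI)
      show "inj_on f {Tp<..}"
        unfolding inj_on_def by (metis dec1 linorder_neqE_linordered_idom order_less_irrefl)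
      show "f ` {Tp<..} = {0<..<m}"
      proof (intro equalityI subsetI)
        fix y assume "y \<in> f ` {Tp<..}"
        then show "y \<in> {0<..<m}" using below2 pos TmTp Tm0 by auto
      next
        fix y assume y: "y \<in> {0<..<m}"
        then obtain e where e: "Tp < e" "f e < y" using smalltop[of y Tp] by auto
        obtain x where x: "Tp \<le> x" "x \<le> e" "f x = y"
          using IVT2'[of f e y Tp] e y Tp cont_sub[of Tp e] Tm0 TmTp by auto
        have "x \<noteq> Tp" using x Tp y by auto
        then show "y \<in> f ` {Tp<..}" using x e by force
      qed
    qed
    show "(f has_real_derivative f' x) (at x)" if "x \<in> {Tp<..}" for x
      using der that Tm0 TmTp by auto
    show "continuous_on {Tp<..} f'" by (rule continuous_on_subset[OF cf']) (use Tm0 TmTp in auto)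
    show "f' x \<noteq> 0" if "x \<in> {Tp<..}" for x using R0(1)[of x] that Tp R0R by auto
  qed auto
  show ?thesis
    by (rule exI[of _ Tm], rule exI[of _ Tp], rule exI[of _ m])
       (use Tm0 TmTp m d1 d2 inc1 dec1 setq in blast)
qed


definition SS :: "real \<Rightarrow> real" where "SS r = sqrt (4 + r^2)"
definition AA :: "real \<Rightarrow> real" where "AA r = ln ((r + SS r) / 2)"
definition kk :: "real \<Rightarrow> real" where "kk r = 24 * AA r - 6 * r * SS r + r^3 * SS r"
definition U0 :: "real \<Rightarrow> real" where
  "U0 r = (1/9 + (2*r^2 - 4) * (SS r * AA r - r) / (3*r^3)) / pi"
definition U1 :: "real \<Rightarrow> real" where
  "U1 r = 2 * kk r / (3 * pi * r^4 * SS r)"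
definition U2 :: "real \<Rightarrow> real" where
  "U2 r = 2 * (4 * r^5 * SS r - kk r * (16 + 5*r^2)) / (3 * pi * r^5 * SS r ^ 3)"

lemma SS_pos: "SS r > 0" by (simp add: SS_def add_pos_nonneg)
lemma SS_nz: "SS r \<noteq> 0" using SS_pos[of r] by linarith
lemma SS_sq: "SS r ^ 2 = 4 + r^2" by (simp add: SS_def add_nonneg_nonneg)
lemma SS_gt: "SS r > r"
proof -
  have "\<bar>r\<bar> < SS r" unfolding SS_def by (rule real_less_rsqrt) (simp add: power2_abs)
  then show ?thesis by linarith
qed
lemma SS_gt': "SS r > - r"
proof -
  have "\<bar>r\<bar> < SS r" unfolding SS_def by (rule real_less_rsqrt) (simp add: power2_abs)
  then show ?thesis by linarith
qed

lemma DS: "(SS has_real_derivative r / SS r) (at r within s)"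
proof -
  have "((\<lambda>r. sqrt (4 + r^2)) has_real_derivative (inverse (sqrt (4 + r^2)) / 2 * (2 * r))) (at r within s)"
  proof (rule DERIV_chain2[where f=sqrt])
    show "DERIV sqrt (4 + r^2) :> inverse (sqrt (4 + r^2)) / 2"
      by (rule DERIV_real_sqrt) (simp add: add_pos_nonneg)
    show "((\<lambda>r. 4 + r^2) has_real_derivative 2 * r) (at r within s)"
      by (auto intro!: derivative_eq_intros)
  qed
  then show ?thesis unfolding SS_def[abs_def] by (simp add: field_simps)
qed

lemma DA: "(AA has_real_derivative 1 / SS r) (at r within s)"
proof -
  have p: "r + SS r > 0" using SS_gt'[of r] by linarith
  have "((\<lambda>r. ln ((r + SS r) / 2)) has_real_derivative inverse ((r + SS r) / 2) * ((1 + r / SS r) / 2)) (at r within s)"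
  proof (rule DERIV_chain2[where f=ln])
    show "DERIV ln ((r + SS r) / 2) :> inverse ((r + SS r) / 2)"
      by (rule DERIV_ln) (use p in simp)
    show "((\<lambda>r. (r + SS r) / 2) has_real_derivative (1 + r / SS r) / 2) (at r within s)"
      by (rule derivative_eq_intros DS refl)+ (simp_all add: field_simps SS_nz)
  qed
  moreover have "inverse ((r + SS r) / 2) * ((1 + r / SS r) / 2) = 1 / SS r"
  proof -
    have e: "1 + r / SS r = (r + SS r) / SS r" using SS_nz[of r] by (simp add: field_simps)
    have "r + SS r \<noteq> 0" using p by linarith
    then show ?thesis unfolding e using SS_nz[of r] by (simp add: inverse_eq_divide divide_simps)
  qed
  ultimately show ?thesis unfolding AA_def[abs_def] by simp
qed

lemma Dkk: "(kk has_real_derivative 4*r^4/SS r) (at r within s)"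
  unfolding kk_def[abs_def]
  apply (rule derivative_eq_intros DS DA refl)+
  apply (simp add: field_simps SS_nz)
  using SS_sq[of r] by algebra

lemma DU0: "r > 0 \<Longrightarrow> (U0 has_real_derivative U1 r) (at r within s)"
  unfolding U0_def[abs_def] U1_def kk_def
  apply (rule derivative_eq_intros DS DA refl | simp)+
  apply (simp add: field_simps SS_nz)
  using SS_sq[of r] by algebra

lemma alg1:
  fixes S r K :: real
  assumes "S \<noteq> 0" "r \<noteq> 0" "S^2 = 4+r^2"
  shows "((4 * r ^ 4 / S * 2) * (3 * pi * r ^ 4 * S) - 2 * K * ((4 * r ^ 3 * (3 * pi)) * S + r / S * (3 * pi * r ^ 4))) / (3 * pi * r ^ 4 * S * (3 * pi * r ^ 4 * S)) = 2 * (4 * r ^ 5 * S - K * (16 + 5 * r^2)) / (3 * pi * r ^ 5 * S ^ 3)"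
  using assms(1,2) apply (simp add: field_simps)
  using assms(3) by algebra

lemma DU1:
  assumes r: "r > 0" shows "(U1 has_real_derivative U2 r) (at r within s)"
proof -
  have nz: "r \<noteq> 0" "SS r \<noteq> 0" using r SS_nz[of r] by auto
  show ?thesis
  unfolding U1_def[abs_def] U2_def
  apply (rule derivative_eq_intros DS Dkk refl | simp)+
  using alg1[OF nz(2,1) SS_sq[of r], of "kk r"] nz by simp_all
qed

lemma alg3:
  fixes D r S :: real
  assumes "D \<noteq> 0" "r \<noteq> 0" "S \<noteq> 0"
  shows "2*r*S/D * (2*(4+r^2)*(4-2*r^2)/(3*r^5*S)) = 4*(4+r^2)*(4-2*r^2)/(3*r^4*D)"
  using assms by (simp add: field_simps eval_nat_numeral)

lemma alg4:
  fixes D r z :: real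
  assumes "D = 4 + r^2 - r^2*z^2" "D \<noteq> 0" "r \<noteq> 0"
  shows "4 * (r^2 * z^2) / (3 * r ^ 4) + r ^ 4 * (16 - 8 * r^2) / (3 * r ^ 8) -
     4*(4+r^2)*(4-2*r^2)/(3*r^4*D) = 4*(z^2 - z^4/3) / D"
  using assms(2,3) apply (simp add: field_simps)
  using assms(1) by algebra

lemma G_deriv:
  fixes r z S C :: real
  assumes r: "r > 0" and z: "0 \<le> z" "z \<le> 1" and S: "S > r" "S^2 = 4 + r^2"
  and C: "C = 2*(4+r^2)*(4-2*r^2)/(3*r^5*S)"
  shows "((\<lambda>z. 4*z^3/(9*r^2) + (16-8*r^2)*z/(3*r^4) - C*(ln (S + r*z) - ln (S - r*z)))
     has_real_derivative (z^2 - z^4/3) / (1 + r^2 * (1 - z^2) / 4)) (at z within X)"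
proof -
  have p1: "S + r*z > 0" using r z S by (smt (verit) mult_nonneg_nonneg)
  have p2: "S - r*z > 0" using r z S by (smt (verit) mult_left_le)
  have nz: "9*r^2 \<noteq> 0" "3*r^4 \<noteq> 0" using r by auto
  have d: "4 + r^2 - r^2*z^2 > 0"
  proof -
    have "z^2 \<le> 1" using z by (simp add: power_le_one)
    then have "r^2*z^2 \<le> r^2" using mult_left_le[of "z^2" "r^2"] by simp
    then show ?thesis by linarith
  qed
  have nz2: "r \<noteq> 0" "S \<noteq> 0" "S + r*z \<noteq> 0" "S - r*z \<noteq> 0" "4 + r^2 - r^2*z^2 \<noteq> 0"
    "4 + r^2 * (1 - z^2) \<noteq> 0"
    using r S p1 p2 d by (auto simp: algebra_simps)
  have L: "r/(S + r*z) + r/(S - r*z) = 2*r*S/(4 + r^2 - r^2*z^2)"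
    using nz2 apply (simp add: field_simps)
    using S(2) by algebra
  have T: "(z^2 - z^4/3) / (1 + r^2 * (1 - z^2) / 4) = 4*(z^2 - z^4/3) / (4 + r^2 - r^2*z^2)"
    using nz2 by (simp add: field_simps)
  show ?thesis
    apply (rule derivative_eq_intros refl nz p1 p2)+
    apply simp
    apply (subst L)
    apply (subst T)
    unfolding C
    apply (subst alg3[OF nz2(5) nz2(1) nz2(2)])
    apply (rule alg4[OF refl nz2(5) nz2(1)])
    done
qed

lemma alg5:
  fixes S r A :: real
  assumes "S \<noteq> 0" "r \<noteq> 0" "S^2 = 4 + r^2"
  shows "r^2/(4*pi) * (4/(9*r^2) + (16-8*r^2)/(3*r^4) - (2*(4+r^2)*(4-2*r^2)/(3*r^5*S))*(2*A))
    = (1/9 + (2*r^2 - 4) * (S * A - r) / (3*r^3)) / pi"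
  using assms(1,2) apply (simp add: field_simps)
  using assms(3) by algebra

lemma U_closed:
  assumes r: "r > 0" shows "U r = U0 r"
proof -
  define S where "S = SS r"
  define C where "C = 2*(4+r^2)*(4-2*r^2)/(3*r^5*S)"
  define G where "G = (\<lambda>z. 4*z^3/(9*r^2) + (16-8*r^2)*z/(3*r^4) - C*(ln (S + r*z) - ln (S - r*z)))"
  have S: "S > r" "S^2 = 4+r^2" by (simp_all add: S_def SS_gt SS_sq)
  have int: "((\<lambda>z. (z^2 - z^4/3) / (1 + r^2 * (1 - z^2) / 4)) has_integral G 1 - G 0) {0..1}"
  proof (rule fundamental_theorem_of_calculus)
    show "0 \<le> (1::real)" by simp
    fix z :: real assume z: "z \<in> {0..1}"
    have "(G has_real_derivative (z^2 - z^4/3) / (1 + r^2 * (1 - z^2) / 4)) (at z within {0..1})"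
      unfolding G_def by (rule G_deriv[OF r _ _ S C_def]) (use z in auto)
    then show "(G has_vector_derivative (z^2 - z^4/3) / (1 + r^2 * (1 - z^2) / 4)) (at z within {0..1})"
      by (simp add: has_real_derivative_iff_has_vector_derivative)
  qed
  have I: "integral {0..1} (\<lambda>z. (z^2 - z^4/3) / (1 + r^2 * (1 - z^2) / 4)) = G 1 - G 0"
    using int by (rule integral_unique)
  have G0: "G 0 = 0" by (simp add: G_def)
  have sp: "S + r > 0" "S - r > 0" using S r by auto
  have prod: "(S + r) * (S - r) = 4" using S(2) by algebra
  have lnq: "ln (S + r) - ln (S - r) = 2 * AA r"
  proof -
    have "ln (S + r) + ln (S - r) = ln 4" using ln_mult_pos[OF sp] prod by simp
    moreover have "ln (4::real) = 2 * ln 2"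
      using ln_realpow[of 2 2] by simp
    moreover have "AA r = ln (S + r) - ln 2"
      unfolding AA_def S_def[symmetric] using sp by (simp add: ln_divide_pos add.commute)
    ultimately show ?thesis by linarith
  qed
  have G1: "G 1 = 4/(9*r^2) + (16-8*r^2)/(3*r^4) - C*(2*AA r)"
    by (simp add: G_def lnq)
  show ?thesis
    unfolding U_def I G0 G1 C_def U0_def S_def[symmetric]
    using alg5[of S r "AA r"] S r by simp
qed

lemma integrand_bounds:
  fixes r z :: real assumes z: "0 \<le> z" "z \<le> 1"
  shows "0 \<le> (z^2 - z^4/3) / (1 + r^2 * (1 - z^2) / 4)"
    and "(z^2 - z^4/3) / (1 + r^2 * (1 - z^2) / 4) \<le> 1"
proof -
  have z2: "z^2 \<le> 1" "0 \<le> z^2" using z by (simp_all add: power_le_one)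
  have z4: "z^4 = z^2 * z^2" by algebra
  have num: "0 \<le> z^2 - z^4/3" "z^2 - z^4/3 \<le> 1"
  proof -
    have a: "z^2*z^2 \<le> z^2" using mult_left_le[OF z2(1) z2(2)] .
    have b: "0 \<le> z^2*z^2" by simp
    show "0 \<le> z^2 - z^4/3" unfolding z4 using a b z2 by linarith
    show "z^2 - z^4/3 \<le> 1" unfolding z4 using a b z2 by linarith
  qed
  have den: "1 \<le> 1 + r^2 * (1 - z^2) / 4" using z2 by simp
  show "0 \<le> (z^2 - z^4/3) / (1 + r^2 * (1 - z^2) / 4)" using num den by simp
  show "(z^2 - z^4/3) / (1 + r^2 * (1 - z^2) / 4) \<le> 1"
    using num den by (simp add: divide_le_eq)
qed

lemma integrand_cont: "continuous_on {0..1} (\<lambda>z::real. (z^2 - z^4/3) / (1 + r^2 * (1 - z^2) / 4))"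
proof (intro continuous_intros ballI)
  fix z :: real assume "z \<in> {0..1}"
  then have "z^2 \<le> 1" by (simp add: power_le_one)
  then show "1 + r^2 * (1 - z^2) / 4 \<noteq> 0" by (smt (verit) divide_nonneg_pos mult_nonneg_nonneg zero_le_power2)
qed auto

lemma U_bounds: "0 \<le> U r" "U r \<le> r^2 / (4*pi)"
proof -
  let ?f = "\<lambda>z::real. (z^2 - z^4/3) / (1 + r^2 * (1 - z^2) / 4)"
  have int: "?f integrable_on {0..1}" by (rule integrable_continuous_interval[OF integrand_cont])
  have i0: "0 \<le> integral {0..1} ?f"
    by (rule integral_nonneg[OF int]) (use integrand_bounds in auto)
  have "integral {0..1} ?f \<le> integral {0..1} (\<lambda>z::real. 1)"
    by (rule integral_le[OF int]) (use integrand_bounds in auto)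
  then have i1: "integral {0..1} ?f \<le> 1" by simp
  have c: "0 \<le> r^2 / (4*pi)" by simp
  show "0 \<le> U r" unfolding U_def using i0 c by simp
  show "U r \<le> r^2 / (4*pi)" unfolding U_def using mult_left_mono[OF i1 c] by simp
qed

lemma U_0: "U 0 = 0" by (simp add: U_def)

lemma DERIV_U0: "(U has_real_derivative 0) (at 0)"
  unfolding has_field_derivative_iff
proof (rule Lim_null_comparison)
  show "eventually (\<lambda>y. norm ((U y - U 0) / (y - 0)) \<le> \<bar>y\<bar> / (4*pi)) (at 0)"
  proof (rule always_eventually, rule allI)
    fix y :: real
    show "norm ((U y - U 0) / (y - 0)) \<le> \<bar>y\<bar> / (4*pi)"
    proof (cases "y = 0")
      case True then show ?thesis by simp
    next
      case False
      have "norm ((U y - U 0) / (y - 0)) = U y / \<bar>y\<bar>" using U_bounds(1)[of y] by (simp add: U_0)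
      also have "\<dots> \<le> (y^2/(4*pi)) / \<bar>y\<bar>"
        by (rule divide_right_mono) (use U_bounds(2)[of y] in auto)
      also have "y^2 = \<bar>y\<bar> * \<bar>y\<bar>" by (simp add: power2_eq_square)
      also have "(\<bar>y\<bar> * \<bar>y\<bar> / (4*pi)) / \<bar>y\<bar> = \<bar>y\<bar> / (4*pi)" using False by (simp add: field_simps del: abs_mult_self_eq)
      finally show ?thesis .
    qed
  qed
  show "((\<lambda>y. \<bar>y\<bar> / (4*pi)) \<longlongrightarrow> 0) (at 0)"
    by (intro tendsto_divide_zero tendsto_rabs_zero tendsto_ident_at)
qed

lemma Phi_0: "Phi 0 = 0"
  unfolding Phi_def using DERIV_imp_deriv[OF DERIV_U0] by simp

lemma kk_0: "kk 0 = 0" by (simp add: kk_def AA_def SS_def)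

lemma kk_pos: assumes r: "r > 0" shows "kk r > 0"
proof -
  obtain t where t: "0 < t" "t < r" "kk r - kk 0 = (r - 0) * (4*t^4/SS t)"
    using MVT2[OF r, of kk "\<lambda>t. 4*t^4/SS t"] Dkk by blast
  have "4*t^4/SS t > 0" using t SS_pos[of t] by simp
  then have "r * (4*t^4/SS t) > 0" by (rule mult_pos_pos[OF r])
  then have "(r - 0) * (4*t^4/SS t) > 0" by simp
  then show ?thesis using t kk_0 by linarith
qed

lemma U1_pos: "r > 0 \<Longrightarrow> U1 r > 0"
  unfolding U1_def using kk_pos[of r] SS_pos[of r] by simp

lemma U0_nonneg: "r > 0 \<Longrightarrow> U0 r \<ge> 0"
  using U_closed[of r] U_bounds(1)[of r] by simp

lemma deriv_U: assumes r: "r > 0" shows "deriv U r = U1 r"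
proof -
  have "(U has_real_derivative U1 r) (at r)"
    by (rule has_field_derivative_transform_within_open[OF DU0[OF r] open_greaterThan[of 0]])
       (use r U_closed in auto)
  then show ?thesis by (rule DERIV_imp_deriv)
qed

lemma Phi_eq: "r > 0 \<Longrightarrow> Phi r = U1 r / (1 + U0 r)"
  unfolding Phi_def using deriv_U U_closed by simp

lemma lim_U2_0: "(U2 \<longlongrightarrow> 2 * inverse pi / 15) (at_right 0)"
  unfolding U2_def[abs_def] kk_def AA_def SS_def by real_asymp
lemma lim_U0_0: "(U0 \<longlongrightarrow> 0) (at_right 0)"
  unfolding U0_def[abs_def] AA_def SS_def by real_asymp
lemma lim_U1_0: "(U1 \<longlongrightarrow> 0) (at_right 0)"
  unfolding U1_def[abs_def] kk_def AA_def SS_def by real_asymp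
lemma lim_U2_top: "((\<lambda>r. r^2 * U2 r) \<longlongrightarrow> - (2 * inverse pi / 3)) at_top"
  unfolding U2_def kk_def AA_def SS_def by real_asymp
lemma lim_U0_top: "((\<lambda>r. (1 + U0 r) / ln r) \<longlongrightarrow> 2 * inverse pi / 3) at_top"
  unfolding U0_def AA_def SS_def by real_asymp
lemma lim_U1_top: "((\<lambda>r. (r * U1 r)^2 / ln r) \<longlongrightarrow> 0) at_top"
  unfolding U1_def kk_def AA_def SS_def by real_asymp
lemma lim_P_0: "((\<lambda>r. U1 r / (1 + U0 r)) \<longlongrightarrow> 0) (at_right 0)"
  unfolding U0_def U1_def kk_def AA_def SS_def by real_asymp
lemma lim_P_top: "((\<lambda>r. U1 r / (1 + U0 r)) \<longlongrightarrow> 0) at_top"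
  unfolding U0_def U1_def kk_def AA_def SS_def by real_asymp
lemma eq_P_0: "(\<lambda>r. U1 r / (1 + U0 r)) \<sim>[at_right 0] (\<lambda>r. 2 * r / (15 * pi))"
  unfolding U0_def U1_def kk_def AA_def SS_def by real_asymp
lemma eq_P_top: "(\<lambda>r. U1 r / (1 + U0 r)) \<sim>[at_top] (\<lambda>r. 1 / (r * ln r))"
  unfolding U0_def U1_def kk_def AA_def SS_def by real_asymp

lemma cont_SS_UNIV: "continuous_on UNIV SS"
  by (rule continuous_at_imp_continuous_on) (use DS DERIV_isCont in blast)
lemma cont_kk_UNIV: "continuous_on UNIV kk"
  by (rule continuous_at_imp_continuous_on) (use Dkk DERIV_isCont in blast)
lemma cont_SS[continuous_intros]: "continuous_on s f \<Longrightarrow> continuous_on s (\<lambda>x. SS (f x))"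
  by (rule continuous_on_compose2[OF cont_SS_UNIV]) auto
lemma cont_kk[continuous_intros]: "continuous_on s f \<Longrightarrow> continuous_on s (\<lambda>x. kk (f x))"
  by (rule continuous_on_compose2[OF cont_kk_UNIV]) auto

lemma cont_U0: "continuous_on {0<..} U0"
  by (rule continuous_at_imp_continuous_on) (use DU0 DERIV_isCont in force)
lemma cont_U1: "continuous_on {0<..} U1"
  by (rule continuous_at_imp_continuous_on) (use DU1 DERIV_isCont in force)
lemma cont_U2: "continuous_on {0<..} U2"
  unfolding U2_def
  by (intro continuous_intros) (use SS_nz in auto)

definition P' :: "real \<Rightarrow> real" where
  "P' r = (U2 r * (1 + U0 r) - U1 r * U1 r) / ((1 + U0 r) * (1 + U0 r))"

lemma DPhi: assumes r: "r > 0" shows "(Phi has_real_derivative P' r) (at r)"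
proof -
  have nz: "1 + U0 r \<noteq> 0" using U0_nonneg[OF r] by linarith
  have "((\<lambda>r. U1 r / (1 + U0 r)) has_real_derivative
        (U2 r * (1 + U0 r) - U1 r * (0 + U1 r)) / ((1 + U0 r) * (1 + U0 r))) (at r)"
    by (rule DERIV_divide[OF DU1[OF r] DERIV_add[OF DERIV_const DU0[OF r]] nz])
  then have "((\<lambda>r. U1 r / (1 + U0 r)) has_real_derivative P' r) (at r)"
    by (simp add: P'_def)
  then show ?thesis
    by (rule has_field_derivative_transform_within_open[OF _ open_greaterThan[of 0]])
       (use r Phi_eq in auto)
qed

lemma cont_P': "continuous_on {0<..} P'"
  unfolding P'_def
  by (intro continuous_intros cont_U0 cont_U1 cont_U2)
     (use U0_nonneg in \<open>fastforce simp: add_nonneg_eq_0_iff\<close>)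

lemma Phi_pos: "r > 0 \<Longrightarrow> Phi r > 0"
  using Phi_eq[of r] U1_pos[of r] U0_nonneg[of r] by simp

lemma ev_Phi_0: "eventually (\<lambda>r. U1 r / (1 + U0 r) = Phi r) (at_right 0)"
  using eventually_at_right_less[of 0] by eventually_elim (simp add: Phi_eq)
lemma ev_Phi_top: "eventually (\<lambda>r. U1 r / (1 + U0 r) = Phi r) at_top"
  using eventually_gt_at_top[of 0] by eventually_elim (simp add: Phi_eq)

lemma inc_P': "eventually (\<lambda>r. P' r > 0) (at_right 0)"
proof -
  have N: "((\<lambda>r. U2 r * (1 + U0 r) - U1 r * U1 r) \<longlongrightarrow> 2 * inverse pi / 15 * (1 + 0) - 0 * 0) (at_right 0)"
    by (intro tendsto_intros lim_U2_0 lim_U0_0 lim_U1_0)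
  have "2 * inverse pi / 15 * (1 + 0) - 0 * 0 > (0::real)" by simp
  from order_tendstoD(1)[OF N this] eventually_at_right_less[of 0]
  show ?thesis
  proof eventually_elim
    case (elim r)
    then have "(1 + U0 r) * (1 + U0 r) > 0" using U0_nonneg[of r] by (simp add: add_pos_nonneg)
    then show ?case using elim by (simp add: P'_def)
  qed
qed

lemma dec_P': "eventually (\<lambda>r. P' r < 0) at_top"
proof -
  have N: "((\<lambda>r. (r^2 * U2 r) * ((1 + U0 r) / ln r) - (r * U1 r)^2 / ln r) \<longlongrightarrow>
      - (2 * inverse pi / 3) * (2 * inverse pi / 3) - 0) at_top"
    by (intro tendsto_intros lim_U2_top lim_U0_top lim_U1_top)
  have "- (2 * inverse pi / 3) * (2 * inverse pi / 3) - 0 < (0::real)" by simp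
  from order_tendstoD(2)[OF N this] eventually_gt_at_top[of 1]
  show ?thesis
  proof eventually_elim
    case (elim r)
    then have r: "r > 1" "ln r > 0" by auto
    have eq: "(r^2 * U2 r) * ((1 + U0 r) / ln r) - (r * U1 r)^2 / ln r
       = (r^2 / ln r) * (U2 r * (1 + U0 r) - U1 r * U1 r)"
      using r by (simp add: field_simps power2_eq_square)
    have pos: "r^2 / ln r > 0" using r by simp
    have m: "(r^2 / ln r) * (U2 r * (1 + U0 r) - U1 r * U1 r) < 0"
      using elim(1) by (simp only: eq)
    have "U2 r * (1 + U0 r) - U1 r * U1 r < 0"
    proof (rule ccontr)
      assume "\<not> ?thesis"
      then have "0 \<le> U2 r * (1 + U0 r) - U1 r * U1 r" by linarith
      then have "0 \<le> (r^2 / ln r) * (U2 r * (1 + U0 r) - U1 r * U1 r)"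
        using pos by (intro mult_nonneg_nonneg) auto
      then show False using m by linarith
    qed
    moreover have "(1 + U0 r) * (1 + U0 r) > 0" using U0_nonneg[of r] r by (simp add: add_pos_nonneg)
    ultimately show ?case by (simp add: P'_def divide_neg_pos)
  qed
qed

theorem lemma9:
  shows "\<exists>Tm Tp Phi0::real. 0 < Tm \<and> Tm < Tp \<and> 0 < Phi0 \<and>
     diffeo_onto Phi {0<..<Tm} {0<..<Phi0} \<and>
     (\<forall>x\<in>{0<..<Tm}. \<forall>y\<in>{0<..<Tm}. x < y \<longrightarrow> Phi x < Phi y) \<and>
     diffeo_onto Phi {Tp<..} {0<..<Phi0} \<and>
     (\<forall>x\<in>{Tp<..}. \<forall>y\<in>{Tp<..}. x < y \<longrightarrow> Phi y < Phi x) \<and>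
     {r. 0 \<le> r \<and> Phi r \<in> {0<..<Phi0}} = {0<..<Tm} \<union> {Tp<..} \<and>
     Phi \<sim>[at_right 0] (\<lambda>r. 2 * r / (15 * pi)) \<and>
     Phi \<sim>[at_top] (\<lambda>r. 1 / (r * ln r))"
proof -
  have lim0: "(Phi \<longlongrightarrow> 0) (at_right 0)"
    using tendsto_cong[OF ev_Phi_0] lim_P_0 by blast
  have limtop: "(Phi \<longlongrightarrow> 0) at_top"
    using tendsto_cong[OF ev_Phi_top] lim_P_top by blast
  have as0: "Phi \<sim>[at_right 0] (\<lambda>r. 2 * r / (15 * pi))"
    by (rule asymp_equiv_transfer[OF eq_P_0 ev_Phi_0]) simp
  have astop: "Phi \<sim>[at_top] (\<lambda>r. 1 / (r * ln r))"
    by (rule asymp_equiv_transfer[OF eq_P_top ev_Phi_top]) simp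
  have "\<exists>Tm Tp Phi0::real. 0 < Tm \<and> Tm < Tp \<and> 0 < Phi0 \<and>
     diffeo_onto Phi {0<..<Tm} {0<..<Phi0} \<and>
     (\<forall>x\<in>{0<..<Tm}. \<forall>y\<in>{0<..<Tm}. x < y \<longrightarrow> Phi x < Phi y) \<and>
     diffeo_onto Phi {Tp<..} {0<..<Phi0} \<and>
     (\<forall>x\<in>{Tp<..}. \<forall>y\<in>{Tp<..}. x < y \<longrightarrow> Phi y < Phi x) \<and>
     {r. 0 \<le> r \<and> Phi r \<in> {0<..<Phi0}} = {0<..<Tm} \<union> {Tp<..}"
    by (rule abstract_shape[OF DPhi cont_P' Phi_pos Phi_0 lim0 limtop inc_P' dec_P'])
  then show ?thesis using as0 astop by blast
qed

end
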